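(* Let $m,n\geq 5$ be integers and let $T_{m,n}=C_m\square C_n$ be the torus grid graph (Cartesian product of the cycles on $m$ and $n$ vertices). Then $\pi_{\mathrm{opt}}(T_{m,n})\geq \frac{2}{13}nm$.
   Context: A pebble distribution on a graph $G$ is a function $P:V(G)\to\mathbb{Z}_{\geq 0}$; its size is $|P|=\sum_v P(v)$. A pebbling move from a vertex $u$ with at least two pebbles to an adjacent vertex $v$ removes two pebbles from $u$ and adds one pebble to $v$. A vertex is reachable under $P$ if some sequence of pebbling moves (each executable, i.e. never making a pebble count negative) yields a distribution with at least one pebble on it. $P$ is solvable if every vertex is reachable. The optimal pebbling number $\pi_{\mathrm{opt}}(G)$ is the minimum size of a solvable distribution on $G$. The Cartesian product $G\square H$ has vertex set $V(G)\times V(H)$, with $(g_1,h_1)\sim(g_2,h_2)$ iff ($g_1g_2\in E(G)$ and $h_1=h_2$) or ($h_1h_2\in E(H)$ and $g_1=g_2$). *)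

theory Defs
  imports Complex_Main
begin

definition pebbling_move :: "('a \<Rightarrow> 'a \<Rightarrow> bool) \<Rightarrow> ('a \<Rightarrow> nat) \<Rightarrow> ('a \<Rightarrow> nat) \<Rightarrow> bool" where
  "pebbling_move E P Q \<longleftrightarrow>
     (\<exists>u v. E u v \<and> 2 \<le> P u \<and>
        Q = (let P' = P(u := P u - 2) in P'(v := P' v + 1)))"

definition reachable :: "('a \<Rightarrow> 'a \<Rightarrow> bool) \<Rightarrow> ('a \<Rightarrow> nat) \<Rightarrow> 'a \<Rightarrow> bool" where
  "reachable E P v \<longleftrightarrow> (\<exists>Q. (pebbling_move E)\<^sup>*\<^sup>* P Q \<and> 1 \<le> Q v)"

definition is_distribution :: "'a set \<Rightarrow> ('a \<Rightarrow> nat) \<Rightarrow> bool" where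
  "is_distribution V P \<longleftrightarrow> (\<forall>x. x \<notin> V \<longrightarrow> P x = 0)"

definition solvable :: "'a set \<Rightarrow> ('a \<Rightarrow> 'a \<Rightarrow> bool) \<Rightarrow> ('a \<Rightarrow> nat) \<Rightarrow> bool" where
  "solvable V E P \<longleftrightarrow> (\<forall>v\<in>V. reachable E P v)"

definition pi_opt :: "'a set \<Rightarrow> ('a \<Rightarrow> 'a \<Rightarrow> bool) \<Rightarrow> nat" where
  "pi_opt V E = Inf {sum P V | P. is_distribution V P \<and> solvable V E P}"

definition cycle_adj :: "nat \<Rightarrow> nat \<Rightarrow> nat \<Rightarrow> bool" where
  "cycle_adj m i j \<longleftrightarrow> i < m \<and> j < m \<and> i \<noteq> j \<and> (j = Suc i mod m \<or> i = Suc j mod m)"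

definition cart_adj :: "('a \<Rightarrow> 'a \<Rightarrow> bool) \<Rightarrow> ('b \<Rightarrow> 'b \<Rightarrow> bool) \<Rightarrow> 'a \<times> 'b \<Rightarrow> 'a \<times> 'b \<Rightarrow> bool" where
  "cart_adj G H x y \<longleftrightarrow>
     (G (fst x) (fst y) \<and> snd x = snd y) \<or> (H (snd x) (snd y) \<and> fst x = fst y)"

definition torus_vertices :: "nat \<Rightarrow> nat \<Rightarrow> (nat \<times> nat) set" where
  "torus_vertices m n = {0..<m} \<times> {0..<n}"

definition torus_adj :: "nat \<Rightarrow> nat \<Rightarrow> nat \<times> nat \<Rightarrow> nat \<times> nat \<Rightarrow> bool" where
  "torus_adj m n = cart_adj (cycle_adj m) (cycle_adj n)"

end

theory Submission
  imports Defs
begin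


fun walk :: "('a \<Rightarrow> 'a \<Rightarrow> bool) \<Rightarrow> 'a set \<Rightarrow> nat \<Rightarrow> 'a \<Rightarrow> 'a \<Rightarrow> bool" where
  "walk E T 0 a b = (a = b \<and> a \<in> T)"
| "walk E T (Suc k) a b = (a \<in> T \<and> (\<exists>c. E a c \<and> walk E T k c b))"

lemma walk_in: "walk E T k a b \<Longrightarrow> a \<in> T \<and> b \<in> T"
  by (induction k arbitrary: a) auto

lemma walk_snoc: "walk E T k a y \<Longrightarrow> E y x \<Longrightarrow> x \<in> T \<Longrightarrow> walk E T (Suc k) a x"
  by (induction k arbitrary: a) auto

lemma walk_last: "walk E T (Suc k) a x \<Longrightarrow> \<exists>y. walk E T k a y \<and> E y x \<and> x \<in> T"
proof (induction k arbitrary: a)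
  case 0 then show ?case by auto
next
  case (Suc k)
  from Suc.prems obtain c where c: "a \<in> T" "E a c" "walk E T (Suc k) c x" by auto
  from Suc.IH[OF c(3)] obtain y where "walk E T k c y" "E y x" "x \<in> T" by auto
  then show ?case using c(1,2) by (intro exI[of _ y]) auto
qed

definition dT :: "('a \<Rightarrow> 'a \<Rightarrow> bool) \<Rightarrow> 'a set \<Rightarrow> 'a \<Rightarrow> 'a \<Rightarrow> nat" where
  "dT E T a b = (LEAST k. walk E T k a b)"

definition Kw :: "('a \<Rightarrow> 'a \<Rightarrow> bool) \<Rightarrow> 'a set \<Rightarrow> 'a \<Rightarrow> 'a \<Rightarrow> real" where
  "Kw E T a b = (if \<exists>k. walk E T k a b then (1/2) ^ dT E T a b else 0)"

lemma Kw_nonneg: "0 \<le> Kw E T a b"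
  unfolding Kw_def by auto

lemma Kw_self: "a \<in> T \<Longrightarrow> Kw E T a a = 1"
proof -
  assume "a \<in> T"
  then have w: "walk E T 0 a a" by simp
  then have "dT E T a a = 0" unfolding dT_def by (rule Least_eq_0)
  moreover have "\<exists>k. walk E T k a a" using w by blast
  ultimately show ?thesis unfolding Kw_def by auto
qed

lemma Kw_lip:
  assumes "s \<in> T" "E s t"
  shows "Kw E T t w \<le> 2 * Kw E T s w"
proof (cases "\<exists>k. walk E T k t w")
  case False then show ?thesis unfolding Kw_def using Kw_nonneg[of E T s w] by (simp add: Kw_def)
next
  case True
  define k where "k = dT E T t w"
  have wk: "walk E T k t w" unfolding k_def dT_def using True by (rule LeastI_ex)
  then have ws: "walk E T (Suc k) s w" using assms by auto
  then have le: "dT E T s w \<le> Suc k" unfolding dT_def by (rule Least_le)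
  have ex2: "\<exists>k. walk E T k s w" using ws by blast
  have "Kw E T s w = (1/2) ^ dT E T s w" using ex2 unfolding Kw_def by auto
  also have "\<dots> \<ge> (1/2) ^ Suc k" by (rule power_decreasing[OF le]) auto
  finally have "Kw E T s w \<ge> (1/2)^Suc k" .
  moreover have "Kw E T t w = (1/2)^k" using True unfolding Kw_def k_def by auto
  ultimately show ?thesis by simp
qed

lemma Kw_parent:
  assumes "u \<in> T" "x \<noteq> u" "0 < Kw E T u x"
  shows "\<exists>y. E y x \<and> y \<in> T \<and> Kw E T u y = 2 * Kw E T u x"
proof -
  have ex: "\<exists>k. walk E T k u x" using assms(3) unfolding Kw_def by (auto split: if_splits)
  define D where "D = dT E T u x"
  have wD: "walk E T D u x" unfolding D_def dT_def using ex by (rule LeastI_ex)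
  have "D \<noteq> 0" using wD assms(2) by (cases D) auto
  then obtain k where Dk: "D = Suc k" by (cases D) auto
  from walk_last[of E T k u x] wD Dk obtain y where y: "walk E T k u y" "E y x" "x \<in> T" by auto
  have yT: "y \<in> T" using walk_in[OF y(1)] by simp
  have le: "dT E T u y \<le> k" unfolding dT_def using y(1) by (rule Least_le)
  have ge: "k \<le> dT E T u y"
  proof (rule ccontr)
    assume "\<not> k \<le> dT E T u y"
    then have lt: "dT E T u y < k" by simp
    have "walk E T (dT E T u y) u y" unfolding dT_def using y(1) by (rule LeastI)
    then have "walk E T (Suc (dT E T u y)) u x" using y(2,3) by (rule walk_snoc)
    then have "D \<le> Suc (dT E T u y)" unfolding D_def dT_def by (rule Least_le)
    then show False using lt Dk by simp
  qed
  have "Kw E T u y = (1/2)^k" using y(1) le ge unfolding Kw_def by auto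
  moreover have "Kw E T u x = (1/2)^Suc k" using ex Dk unfolding Kw_def D_def by auto
  ultimately show ?thesis using y(2) yT by (intro exI[of _ y]) auto
qed

lemma walk_dist:
  assumes d0: "d u = (0::nat)" and dl: "\<And>y x. E y x \<Longrightarrow> d x \<le> d y + 1"
  shows "walk E T k u x \<Longrightarrow> d x \<le> k"
proof (induction k arbitrary: x)
  case 0 then show ?case using d0 by simp
next
  case (Suc k)
  from walk_last[OF Suc.prems] obtain y where "walk E T k u y" "E y x" by auto
  with Suc.IH dl show ?case by fastforce
qed

lemma Kw_le_pow:
  assumes d0: "d u = (0::nat)" and dl: "\<And>y x. E y x \<Longrightarrow> d x \<le> d y + 1"
  shows "Kw E T u x \<le> (1/2) ^ d x"
proof (cases "\<exists>k. walk E T k u x")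
  case False then show ?thesis unfolding Kw_def by simp
next
  case True
  have "walk E T (dT E T u x) u x" unfolding dT_def using True by (rule LeastI_ex)
  then have "d x \<le> dT E T u x" using walk_dist[of d u E T "dT E T u x" x] d0 dl by blast
  then have "(1/2::real) ^ dT E T u x \<le> (1/2) ^ d x" by (rule power_decreasing) auto
  then show ?thesis using True unfolding Kw_def by simp
qed



definition TT :: "('a \<Rightarrow> 'a \<Rightarrow> bool) \<Rightarrow> ('a \<Rightarrow> nat) \<Rightarrow> 'a set" where
  "TT E P = {w. \<exists>Q. (pebbling_move E)\<^sup>*\<^sup>* P Q \<and> 2 \<le> Q w}"

lemma move_eq:
  assumes "pebbling_move E Q1 Q2"
  obtains s t where "E s t" "2 \<le> Q1 s"
    "Q2 = (let P' = Q1(s := Q1 s - 2) in P'(t := P' t + 1))"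
  using assms unfolding pebbling_move_def by blast

lemma reach_cases:
  assumes "(pebbling_move E)\<^sup>*\<^sup>* P Q" "1 \<le> Q v"
  shows "1 \<le> P v \<or> (\<exists>w\<in>TT E P. E w v)"
  using assms
proof (induction arbitrary: v rule: rtranclp_induct)
  case base then show ?case by simp
next
  case (step Q1 Q2)
  show ?case
  proof (cases "1 \<le> Q1 v")
    case True then show ?thesis using step.IH by blast
  next
    case False
    from step.hyps(2) obtain s t where st: "E s t" "2 \<le> Q1 s"
      "Q2 = (let P' = Q1(s := Q1 s - 2) in P'(t := P' t + 1))" by (rule move_eq)
    have "v = t"
    proof (rule ccontr)
      assume "v \<noteq> t"
      then have "Q2 v \<le> Q1 v" using st(3) by (auto simp: Let_def)
      then show False using False step.prems by simp
    qed
    moreover have "s \<in> TT E P" using step.hyps(1) st(2) unfolding TT_def by blast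
    ultimately show ?thesis using st(1) by blast
  qed
qed

lemma reach_support:
  assumes "(pebbling_move E)\<^sup>*\<^sup>* P Q"
    and P0: "\<And>x. x \<notin> V \<Longrightarrow> P x = 0"
    and EV: "\<And>a b. E a b \<Longrightarrow> a \<in> V \<Longrightarrow> b \<in> V"
  shows "x \<notin> V \<Longrightarrow> Q x = 0"
  using assms(1)
proof (induction arbitrary: x rule: rtranclp_induct)
  case base then show ?case using P0 by simp
next
  case (step Q1 Q2)
  from step.hyps(2) obtain s t where st: "E s t" "2 \<le> Q1 s"
    "Q2 = (let P' = Q1(s := Q1 s - 2) in P'(t := P' t + 1))" by (rule move_eq)
  have "s \<in> V" using step.IH st(2) by (cases "s \<in> V") auto
  then have "t \<in> V" using EV st(1) by blast
  then show ?case using step.prems step.IH st(3) \<open>s \<in> V\<close> by (auto simp: Let_def)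
qed

lemma TT_sub:
  assumes P0: "\<And>x. x \<notin> V \<Longrightarrow> P x = 0"
    and EV: "\<And>a b. E a b \<Longrightarrow> a \<in> V \<Longrightarrow> b \<in> V"
  shows "TT E P \<subseteq> V"
proof
  fix w assume "w \<in> TT E P"
  then obtain Q where Q: "(pebbling_move E)\<^sup>*\<^sup>* P Q" "2 \<le> Q w" unfolding TT_def by blast
  show "w \<in> V" using reach_support[of E P Q V w] Q P0 EV by (cases "w \<in> V") auto
qed

lemma weight_mono:
  assumes fin: "finite (TT E P)" and irr: "\<And>a. \<not> E a a"
  shows "(pebbling_move E)\<^sup>*\<^sup>* P Q \<Longrightarrow>
    (\<Sum>a\<in>TT E P. real (Q a) * Kw E (TT E P) a w) \<le> (\<Sum>a\<in>TT E P. real (P a) * Kw E (TT E P) a w)"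
proof (induction rule: rtranclp_induct)
  case base then show ?case by simp
next
  case (step Q1 Q2)
  let ?T = "TT E P"
  let ?K = "\<lambda>a. Kw E ?T a w"
  from step.hyps(2) obtain s t where st: "E s t" "2 \<le> Q1 s"
    "Q2 = (let P' = Q1(s := Q1 s - 2) in P'(t := P' t + 1))" by (rule move_eq)
  have sT: "s \<in> ?T" using step.hyps(1) st(2) unfolding TT_def by blast
  have neq: "s \<noteq> t" using irr st(1) by blast
  have pt: "\<And>a. real (Q2 a) * ?K a = real (Q1 a) * ?K a - (if a = s then 2 * ?K a else 0) + (if a = t then ?K a else 0)"
    using st(2,3) neq by (auto simp: Let_def of_nat_diff algebra_simps)
  have "(\<Sum>a\<in>?T. real (Q2 a) * ?K a) = (\<Sum>a\<in>?T. real (Q1 a) * ?K a) - (\<Sum>a\<in>?T. (if a = s then 2 * ?K a else 0)) + (\<Sum>a\<in>?T. (if a = t then ?K a else 0))"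
    unfolding pt by (simp add: sum.distrib sum_subtractf)
  also have "\<dots> = (\<Sum>a\<in>?T. real (Q1 a) * ?K a) - 2 * ?K s + (if t \<in> ?T then ?K t else 0)"
    using fin sT by (simp add: sum.delta)
  also have "\<dots> \<le> (\<Sum>a\<in>?T. real (Q1 a) * ?K a)"
    using Kw_lip[of s "TT E P" E t w] sT st(1) Kw_nonneg[of E "TT E P" s w] by auto
  finally show ?case using step.IH by linarith
qed

lemma weight_two:
  assumes fin: "finite (TT E P)" and irr: "\<And>a. \<not> E a a" and wT: "w \<in> TT E P"
  shows "2 \<le> (\<Sum>a\<in>TT E P. real (P a) * Kw E (TT E P) a w)"
proof -
  from wT obtain Q where Q: "(pebbling_move E)\<^sup>*\<^sup>* P Q" "2 \<le> Q w" unfolding TT_def by blast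
  have "real (Q w) * Kw E (TT E P) w w \<le> (\<Sum>a\<in>TT E P. real (Q a) * Kw E (TT E P) a w)"
    by (rule member_le_sum[OF wT]) (auto simp: Kw_nonneg fin)
  also have "\<dots> \<le> (\<Sum>a\<in>TT E P. real (P a) * Kw E (TT E P) a w)"
    by (rule weight_mono[OF fin irr Q(1)])
  finally show ?thesis using Q(2) Kw_self[OF wT, of E] by simp
qed



lemma static_bound:
  fixes E :: "'a \<Rightarrow> 'a \<Rightarrow> bool" and T S V :: "'a set" and w :: "'a \<Rightarrow> 'a"
    and d :: "'a \<Rightarrow> nat" and u :: 'a
  assumes finV: "finite V" and TV: "T \<subseteq> V" and SV: "S \<subseteq> V" and disj: "T \<inter> S = {}"
    and wS: "\<And>x. x \<in> S \<Longrightarrow> w x \<in> T \<and> E (w x) x"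
    and uT: "u \<in> T"
    and sym: "\<And>a b. E a b \<Longrightarrow> E b a"
    and nb: "\<And>y. y \<in> T \<Longrightarrow> finite {x. E y x} \<and> card {x. E y x} \<le> 4"
    and d0: "d u = 0" and dlip: "\<And>y x. E y x \<Longrightarrow> d x \<le> d y + 1"
    and dsum: "(\<Sum>x\<in>V. (1/2::real) ^ d x) \<le> 9"
  shows "(\<Sum>x\<in>T. Kw E T u x) / 2 + (\<Sum>x\<in>S. Kw E T u (w x)) / 2 \<le> 13/2"
proof -
  define K where "K = Kw E T u"
  have K0: "\<And>x. 0 \<le> K x" unfolding K_def by (rule Kw_nonneg)
  have Ku: "K u = 1" unfolding K_def using uT by (rule Kw_self)
  have finT: "finite T" using finite_subset[OF TV finV] .
  have finS: "finite S" using finite_subset[OF SV finV] .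
  define A where "A = (\<Sum>x\<in>T-{u}. K x)"
  define B where "B = (\<Sum>x\<in>S. K (w x) / 2)"
  have sumT: "(\<Sum>x\<in>T. K x) = 1 + A"
    unfolding A_def using finT uT Ku by (simp add: sum.remove)
  have sumS: "(\<Sum>x\<in>S. K (w x)) / 2 = B"
    unfolding B_def by (simp add: sum_divide_distrib)
  have Kpow: "\<And>x. K x \<le> (1/2) ^ d x"
    unfolding K_def by (rule Kw_le_pow[of d u E, OF d0 dlip])
  have one: "1 + A + B \<le> 9"
  proof -
    have "(\<Sum>x\<in>T. K x) \<le> (\<Sum>x\<in>T. (1/2::real) ^ d x)"
      by (rule sum_mono) (rule Kpow)
    moreover have "(\<Sum>x\<in>S. K (w x) / 2) \<le> (\<Sum>x\<in>S. (1/2::real) ^ d x)"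
    proof (rule sum_mono)
      fix x assume "x \<in> S"
      then have "E (w x) x" using wS by blast
      then have "d x \<le> d (w x) + 1" by (rule dlip)
      then have "(1/2::real) ^ (d (w x) + 1) \<le> (1/2) ^ d x" by (rule power_decreasing) auto
      moreover have "K (w x) / 2 \<le> (1/2) ^ (d (w x) + 1)" using Kpow[of "w x"] by simp
      ultimately show "K (w x) / 2 \<le> (1/2) ^ d x" by linarith
    qed
    moreover have "(\<Sum>x\<in>T. (1/2::real) ^ d x) + (\<Sum>x\<in>S. (1/2) ^ d x) = (\<Sum>x\<in>T \<union> S. (1/2) ^ d x)"
      using finT finS disj by (simp add: sum.union_disjoint)
    moreover have "(\<Sum>x\<in>T \<union> S. (1/2::real) ^ d x) \<le> (\<Sum>x\<in>V. (1/2) ^ d x)"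
      by (rule sum_mono2[OF finV]) (use TV SV in auto)
    ultimately show ?thesis using sumT dsum unfolding B_def by linarith
  qed
  define \<kappa> where "\<kappa> x = (if x \<in> T then K x else K (w x) / 2)" for x
  define X0 where "X0 = (T - {u}) \<union> S"
  have finX0: "finite X0" unfolding X0_def using finT finS by simp
  have AB: "A + B = (\<Sum>x\<in>X0. \<kappa> x)"
  proof -
    have "(\<Sum>x\<in>X0. \<kappa> x) = (\<Sum>x\<in>T-{u}. \<kappa> x) + (\<Sum>x\<in>S. \<kappa> x)"
      unfolding X0_def using finT finS disj by (subst sum.union_disjoint) auto
    moreover have "(\<Sum>x\<in>T-{u}. \<kappa> x) = A" unfolding A_def \<kappa>_def by simp
    moreover have "(\<Sum>x\<in>S. \<kappa> x) = B" unfolding B_def \<kappa>_def using disj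
      by (intro sum.cong) auto
    ultimately show ?thesis by simp
  qed
  define X where "X = {x\<in>X0. 0 < \<kappa> x}"
  have k0: "\<And>x. 0 \<le> \<kappa> x" unfolding \<kappa>_def using K0 by simp
  have finX: "finite X" unfolding X_def using finX0 by simp
  have sumX: "(\<Sum>x\<in>X0. \<kappa> x) = (\<Sum>x\<in>X. \<kappa> x)"
    unfolding X_def using finX0 k0 by (intro sum.mono_neutral_right) (auto simp: less_le)
  define p where "p x = (if x \<in> T then (SOME y. E y x \<and> y \<in> T \<and> K y = 2 * K x) else w x)" for x
  have pX: "p x \<in> T \<and> E (p x) x \<and> K (p x) = 2 * \<kappa> x" if "x \<in> X" for x
  proof (cases "x \<in> T")
    case True
    then have "x \<noteq> u" "0 < K x" using that disj unfolding X_def X0_def \<kappa>_def by auto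
    then have "\<exists>y. E y x \<and> y \<in> T \<and> K y = 2 * K x"
      unfolding K_def using Kw_parent[OF uT] by blast
    from someI_ex[OF this] have "E (p x) x \<and> p x \<in> T \<and> K (p x) = 2 * K x"
      unfolding p_def using True by simp
    then show ?thesis using True unfolding \<kappa>_def by simp
  next
    case False
    then have "x \<in> S" using that unfolding X_def X0_def by auto
    then show ?thesis using wS False unfolding p_def \<kappa>_def by simp
  qed
  define fib where "fib y = {x\<in>X. p x = y}" for y
  have fibcard: "real (card (fib y)) * K y \<le> (if y = u then 4 else 3) * K y" if "y \<in> T" for y
  proof (cases "K y = 0")
    case True then show ?thesis by simp
  next
    case False
    then have Kpos: "0 < K y" using K0[of y] by simp
    have sub1: "fib y \<subseteq> {x. E y x}" unfolding fib_def using pX by auto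
    have nby: "finite {x. E y x}" "card {x. E y x} \<le> 4" using nb[OF that] by auto
    show ?thesis
    proof (cases "y = u")
      case True
      have "card (fib y) \<le> 4" using card_mono[OF nby(1) sub1] nby(2) by simp
      then show ?thesis using True Kpos by simp
    next
      case False
      have yX: "y \<in> X" unfolding X_def X0_def \<kappa>_def using that False Kpos by auto
      from pX[OF yX] have py: "p y \<in> T" "E (p y) y" "K (p y) = 2 * K y"
        unfolding \<kappa>_def using that by auto
      have sub2: "fib y \<subseteq> {x. E y x} - {p y}"
      proof
        fix x assume xf: "x \<in> fib y"
        then have xX: "x \<in> X" and pxy: "p x = y" unfolding fib_def by auto
        have "x \<noteq> p y"
        proof
          assume xe: "x = p y"
          then have "x \<in> T" using py by simp
          then have "\<kappa> x = K x" unfolding \<kappa>_def by simp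
          then have "K y = 2 * K (p y)" using pX[OF xX] pxy xe by simp
          then show False using py(3) Kpos by simp
        qed
        then show "x \<in> {x. E y x} - {p y}" using sub1 xf by auto
      qed
      have pyin: "p y \<in> {x. E y x}" using sym[OF py(2)] by simp
      have "card (fib y) \<le> card ({x. E y x} - {p y})"
        using card_mono[OF _ sub2] nby(1) by simp
      also have "\<dots> = card {x. E y x} - 1" using card_Diff_singleton[OF pyin] by simp
      finally have "card (fib y) \<le> 3" using nby(2) by simp
      then show ?thesis using False Kpos by simp
    qed
  qed
  have two: "A + B \<le> 3/2 * A + 2"
  proof -
    have "(\<Sum>x\<in>X. \<kappa> x) = (\<Sum>x\<in>X. K (p x) / 2)"
      using pX by (intro sum.cong) auto
    also have "\<dots> = (\<Sum>y\<in>T. \<Sum>x\<in>fib y. K (p x) / 2)"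
      unfolding fib_def by (rule sum.group[symmetric, OF finX finT]) (use pX in auto)
    also have "\<dots> = (\<Sum>y\<in>T. real (card (fib y)) * K y / 2)"
      unfolding fib_def by (intro sum.cong) auto
    also have "\<dots> \<le> (\<Sum>y\<in>T. (if y = u then 4 else 3) * K y / 2)"
      by (intro sum_mono) (use fibcard in \<open>auto simp: divide_right_mono\<close>)
    also have "\<dots> = 4 * K u / 2 + (\<Sum>y\<in>T-{u}. 3 * K y / 2)"
      using finT uT by (simp add: sum.remove)
    also have "\<dots> = 2 + 3/2 * A"
      unfolding A_def using Ku by (simp add: sum_distrib_left sum_divide_distrib)
    finally show ?thesis using AB sumX by linarith
  qed
  show ?thesis using one two sumT sumS unfolding K_def by linarith
qed



definition cd :: "nat \<Rightarrow> nat \<Rightarrow> nat \<Rightarrow> nat" where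
  "cd m a i = min ((i + m - a) mod m) (m - (i + m - a) mod m)"

lemma cd_self: "cd m a a = 0"
  unfolding cd_def by simp

lemma min_step:
  assumes "k < m" "k' < m" "k' = Suc k mod m \<or> k = Suc k' mod m"
  shows "min k' (m - k') \<le> min k (m - k) + 1"
  using assms by (auto simp: mod_Suc split: if_splits)

lemma cd_lip:
  assumes am: "a < m" and adj: "cycle_adj m i j"
  shows "cd m a j \<le> cd m a i + 1"
proof -
  have ij: "i < m" "j < m" "j = Suc i mod m \<or> i = Suc j mod m" using adj unfolding cycle_adj_def by auto
  define k where "k = (i + m - a) mod m"
  define k' where "k' = (j + m - a) mod m"
  have km: "k < m" "k' < m" unfolding k_def k'_def using am by auto
  have key: "\<And>x y. x < m \<Longrightarrow> y = Suc x mod m \<Longrightarrow> (y + m - a) mod m = Suc ((x + m - a) mod m) mod m"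
  proof -
    fix x y assume xm: "x < m" and y: "y = Suc x mod m"
    have "(y + m - a) mod m = (y + (m - a)) mod m" using am by simp
    also have "\<dots> = (Suc x + (m - a)) mod m" unfolding y by (simp add: mod_add_left_eq)
    also have "\<dots> = Suc (x + (m - a)) mod m" by simp
    also have "\<dots> = Suc ((x + (m - a)) mod m) mod m" by (simp add: mod_Suc_eq)
    also have "x + (m - a) = x + m - a" using am by simp
    finally show "(y + m - a) mod m = Suc ((x + m - a) mod m) mod m" .
  qed
  have "k' = Suc k mod m \<or> k = Suc k' mod m"
    using ij key unfolding k_def k'_def by blast
  then have "min k' (m - k') \<le> min k (m - k) + 1" using km min_step by blast
  then show ?thesis unfolding cd_def k_def k'_def .
qed

lemma sum_min_le3:
  "(\<Sum>k<m. (1/2::real) ^ min k (m - k)) \<le> 3"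
proof -
  have "(\<Sum>k<m. (1/2::real) ^ min k (m - k)) \<le> (\<Sum>k<m. (1/2::real) ^ k + (1/2) ^ (m - k))"
    by (intro sum_mono) (auto simp: min_def)
  also have "\<dots> = (\<Sum>k<m. (1/2::real) ^ k) + (\<Sum>k<m. (1/2) ^ (m - k))"
    by (simp add: sum.distrib)
  also have "(\<Sum>k<m. (1/2::real) ^ (m - k)) = (\<Sum>k<m. (1/2) ^ Suc k)"
  proof -
    have "(\<Sum>k<m. (1/2::real) ^ Suc k) = (\<Sum>i<m. (1/2) ^ Suc (m - Suc i))"
      by (rule sum.nat_diff_reindex[symmetric])
    also have "\<dots> = (\<Sum>i<m. (1/2::real) ^ (m - i))"
      by (intro sum.cong) (auto simp: Suc_diff_Suc)
    finally show ?thesis by simp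
  qed
  also have "(\<Sum>k<m. (1/2::real) ^ Suc k) = (1/2) * (\<Sum>k<m. (1/2) ^ k)"
    by (simp add: sum_distrib_left)
  also have "(\<Sum>k<m. (1/2::real) ^ k) = 2 * (1 - (1/2) ^ m)"
    by (simp add: sum_gp_strict)
  finally have "(\<Sum>k<m. (1/2::real) ^ min k (m - k)) \<le> 2 * (1 - (1/2) ^ m) + 1/2 * (2 * (1 - (1/2) ^ m))" .
  moreover have "2 * (1 - (1/2::real) ^ m) + 1/2 * (2 * (1 - (1/2) ^ m)) = 3 - 3 * (1/2)^m"
    by (simp add: algebra_simps)
  moreover have "(0::real) \<le> (1/2) ^ m" by simp
  ultimately show ?thesis by linarith
qed

lemma sum_cd_le3:
  assumes am: "a < m"
  shows "(\<Sum>i<m. (1/2::real) ^ cd m a i) \<le> 3"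
proof -
  have "(\<Sum>i<m. (1/2::real) ^ cd m a i) = (\<Sum>k<m. (1/2::real) ^ min k (m - k))"
  proof (rule sum.reindex_bij_witness[where i = "\<lambda>k. (k + a) mod m" and j = "\<lambda>i. (i + m - a) mod m"])
    fix i assume "i \<in> {..<m}"
    then have im: "i < m" by simp
    have "((i + m - a) mod m + a) mod m = (i + m - a + a) mod m" by (simp add: mod_add_left_eq)
    also have "i + m - a + a = i + m" using am by simp
    finally show "((i + m - a) mod m + a) mod m = i" using im by simp
  next
    fix i assume "i \<in> {..<m}"
    then show "(i + m - a) mod m \<in> {..<m}" using am by simp
  next
    fix k assume "k \<in> {..<m}"
    then have km: "k < m" by simp
    have "((k + a) mod m + m - a) mod m = ((k + a) mod m + (m - a)) mod m" using am by simp
    also have "\<dots> = (k + a + (m - a)) mod m" by (simp add: mod_add_left_eq)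
    also have "k + a + (m - a) = k + m" using am by simp
    finally show "((k + a) mod m + m - a) mod m = k" using km by simp
  next
    fix k assume "k \<in> {..<m}"
    then show "(k + a) mod m \<in> {..<m}" using am by simp
  next
    fix i assume "i \<in> {..<m}"
    show "(1/2::real) ^ min ((i + m - a) mod m) (m - (i + m - a) mod m) = (1/2) ^ cd m a i"
      by (simp add: cd_def)
  qed
  also have "\<dots> \<le> 3" by (rule sum_min_le3)
  finally show ?thesis .
qed

definition dd :: "nat \<Rightarrow> nat \<Rightarrow> nat \<times> nat \<Rightarrow> nat \<times> nat \<Rightarrow> nat" where
  "dd m n u x = cd m (fst u) (fst x) + cd n (snd u) (snd x)"

lemma dd_self: "dd m n u u = 0"
  unfolding dd_def by (simp add: cd_self)

lemma cycle_adj_sym: "cycle_adj m i j \<Longrightarrow> cycle_adj m j i"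
  unfolding cycle_adj_def by auto

lemma torus_adj_sym: "torus_adj m n a b \<Longrightarrow> torus_adj m n b a"
  unfolding torus_adj_def cart_adj_def using cycle_adj_sym by metis

lemma torus_adj_irr: "\<not> torus_adj m n a a"
  unfolding torus_adj_def cart_adj_def cycle_adj_def by auto

lemma torus_adj_V: "torus_adj m n a b \<Longrightarrow> a \<in> torus_vertices m n \<Longrightarrow> b \<in> torus_vertices m n"
  unfolding torus_adj_def cart_adj_def cycle_adj_def torus_vertices_def by (cases a; cases b) auto

lemma dd_lip:
  assumes u: "u \<in> torus_vertices m n" and adj: "torus_adj m n y x"
  shows "dd m n u x \<le> dd m n u y + 1"
proof -
  have um: "fst u < m" "snd u < n" using u unfolding torus_vertices_def by auto
  from adj have "(cycle_adj m (fst y) (fst x) \<and> snd y = snd x) \<or> (cycle_adj n (snd y) (snd x) \<and> fst y = fst x)"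
    unfolding torus_adj_def cart_adj_def by simp
  then show ?thesis
  proof
    assume h: "cycle_adj m (fst y) (fst x) \<and> snd y = snd x"
    have "cd m (fst u) (fst x) \<le> cd m (fst u) (fst y) + 1" using cd_lip[OF um(1)] h by blast
    then show ?thesis unfolding dd_def using h by simp
  next
    assume h: "cycle_adj n (snd y) (snd x) \<and> fst y = fst x"
    have "cd n (snd u) (snd x) \<le> cd n (snd u) (snd y) + 1" using cd_lip[OF um(2)] h by blast
    then show ?thesis unfolding dd_def using h by simp
  qed
qed

lemma dd_sum:
  assumes u: "u \<in> torus_vertices m n"
  shows "(\<Sum>x\<in>torus_vertices m n. (1/2::real) ^ dd m n u x) \<le> 9"
proof -
  have um: "fst u < m" "snd u < n" using u unfolding torus_vertices_def by auto
  have "(\<Sum>x\<in>torus_vertices m n. (1/2::real) ^ dd m n u x)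
      = (\<Sum>(i,j)\<in>{..<m} \<times> {..<n}. (1/2::real) ^ cd m (fst u) i * (1/2) ^ cd n (snd u) j)"
    unfolding torus_vertices_def dd_def by (intro sum.cong) (auto simp: power_add lessThan_atLeast0)
  also have "\<dots> = (\<Sum>i<m. \<Sum>j<n. (1/2::real) ^ cd m (fst u) i * (1/2) ^ cd n (snd u) j)"
    by (rule sum.cartesian_product[symmetric])
  also have "\<dots> = (\<Sum>i<m. (1/2::real) ^ cd m (fst u) i) * (\<Sum>j<n. (1/2) ^ cd n (snd u) j)"
    by (simp add: sum_product)
  also have "\<dots> \<le> 3 * 3"
    by (rule mult_mono) (auto intro: sum_nonneg sum_cd_le3 um)
  finally show ?thesis by simp
qed

lemma cycle_nb: "cycle_adj m i j \<Longrightarrow> j = Suc i mod m \<or> j = (i + m - 1) mod m"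
proof -
  assume a: "cycle_adj m i j"
  then have jm: "j < m" and c: "j = Suc i mod m \<or> i = Suc j mod m" unfolding cycle_adj_def by auto
  show ?thesis
  proof (cases "j = Suc i mod m")
    case True then show ?thesis by simp
  next
    case False
    then have i: "i = Suc j mod m" using c by simp
    show ?thesis
    proof (cases "Suc j < m")
      case True
      then have "i = Suc j" using i by simp
      then have "i + m - 1 = j + m" by simp
      then show ?thesis using jm by simp
    next
      case False
      then have "Suc j = m" using jm by simp
      then have "i = 0" using i by simp
      then have "i + m - 1 = j" using \<open>Suc j = m\<close> by simp
      then have "(i + m - 1) mod m = j" using jm by simp
      then show ?thesis by simp
    qed
  qed
qed

lemma torus_nb:
  "{x. torus_adj m n y x} \<subseteq> {(Suc (fst y) mod m, snd y), ((fst y + m - 1) mod m, snd y),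
     (fst y, Suc (snd y) mod n), (fst y, (snd y + n - 1) mod n)}"
proof
  fix x assume "x \<in> {x. torus_adj m n y x}"
  then have "(cycle_adj m (fst y) (fst x) \<and> snd y = snd x) \<or> (cycle_adj n (snd y) (snd x) \<and> fst y = fst x)"
    unfolding torus_adj_def cart_adj_def by simp
  then show "x \<in> {(Suc (fst y) mod m, snd y), ((fst y + m - 1) mod m, snd y),
     (fst y, Suc (snd y) mod n), (fst y, (snd y + n - 1) mod n)}"
    using cycle_nb[of m "fst y" "fst x"] cycle_nb[of n "snd y" "snd x"] by (cases x) auto
qed

lemma torus_nb_card: "finite {x. torus_adj m n y x} \<and> card {x. torus_adj m n y x} \<le> 4"
proof -
  let ?L = "[(Suc (fst y) mod m, snd y), ((fst y + m - 1) mod m, snd y),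
     (fst y, Suc (snd y) mod n), (fst y, (snd y + n - 1) mod n)]"
  have s: "{x. torus_adj m n y x} \<subseteq> set ?L" using torus_nb[of m n y] by simp
  have "card (set ?L) \<le> 4" using card_length[of ?L] by simp
  then show ?thesis using s card_mono[OF _ s] finite_subset[OF s] by auto
qed



lemma main_bound:
  assumes dist: "is_distribution (torus_vertices m n) P"
    and solv: "solvable (torus_vertices m n) (torus_adj m n) P"
  shows "real (card (torus_vertices m n)) \<le> 13/2 * real (sum P (torus_vertices m n))"
proof -
  define V where "V = torus_vertices m n"
  define E where "E = torus_adj m n"
  define T where "T = TT E P"
  have finV: "finite V" unfolding V_def torus_vertices_def by simp
  have P0: "\<And>x. x \<notin> V \<Longrightarrow> P x = 0" using dist unfolding is_distribution_def V_def by blast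
  have EV: "\<And>a b. E a b \<Longrightarrow> a \<in> V \<Longrightarrow> b \<in> V" unfolding E_def V_def by (rule torus_adj_V)
  have TV: "T \<subseteq> V" unfolding T_def by (rule TT_sub[OF P0 EV])
  have finT: "finite T" using finite_subset[OF TV finV] .
  have irr: "\<And>a. \<not> E a a" unfolding E_def by (rule torus_adj_irr)
  define \<Phi> where "\<Phi> x = (\<Sum>a\<in>T. real (P a) * Kw E T a x)" for x
  have Phi2: "\<And>x. x \<in> T \<Longrightarrow> 2 \<le> \<Phi> x"
    unfolding \<Phi>_def T_def using weight_two[of E P] finT irr unfolding T_def by blast
  define S where "S = {x \<in> V. x \<notin> T \<and> (\<exists>w\<in>T. E w x)}"
  define wf where "wf x = (SOME w. w \<in> T \<and> E w x)" for x
  have wS: "\<And>x. x \<in> S \<Longrightarrow> wf x \<in> T \<and> E (wf x) x"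
  proof -
    fix x assume "x \<in> S"
    then have "\<exists>w. w \<in> T \<and> E w x" unfolding S_def by blast
    from someI_ex[OF this] show "wf x \<in> T \<and> E (wf x) x" unfolding wf_def .
  qed
  define Th where "Th = {x \<in> V. x \<notin> T \<and> 1 \<le> P x}"
  have cover: "V \<subseteq> T \<union> S \<union> Th"
  proof
    fix v assume vV: "v \<in> V"
    then have "reachable E P v" using solv unfolding solvable_def V_def E_def by blast
    then obtain Q where Q: "(pebbling_move E)\<^sup>*\<^sup>* P Q" "1 \<le> Q v" unfolding reachable_def by blast
    from reach_cases[OF Q] have "1 \<le> P v \<or> (\<exists>w\<in>T. E w v)" unfolding T_def .
    then show "v \<in> T \<union> S \<union> Th" using vV unfolding S_def Th_def by blast
  qed
  have finS: "finite S" unfolding S_def using finV by simp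
  have finTh: "finite Th" unfolding Th_def using finV by simp
  have "real (card V) \<le> real (card (T \<union> S \<union> Th))"
    using card_mono[OF _ cover] finT finS finTh by simp
  also have "\<dots> \<le> real (card T) + real (card S) + real (card Th)"
    using card_Un_le[of "T \<union> S" Th] card_Un_le[of T S] by linarith
  finally have c1: "real (card V) \<le> real (card T) + real (card S) + real (card Th)" .
  have cT: "real (card T) \<le> (\<Sum>x\<in>T. \<Phi> x / 2)"
  proof -
    have "real (card T) = (\<Sum>x\<in>T. 1)" by simp
    also have "\<dots> \<le> (\<Sum>x\<in>T. \<Phi> x / 2)" by (rule sum_mono) (use Phi2 in auto)
    finally show ?thesis .
  qed
  have cS: "real (card S) \<le> (\<Sum>x\<in>S. \<Phi> (wf x) / 2)"
  proof -
    have "real (card S) = (\<Sum>x\<in>S. 1)" by simp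
    also have "\<dots> \<le> (\<Sum>x\<in>S. \<Phi> (wf x) / 2)"
    proof (rule sum_mono)
      fix x assume "x \<in> S"
      then have "wf x \<in> T" using wS by blast
      from Phi2[OF this] show "1 \<le> \<Phi> (wf x) / 2" by simp
    qed
    finally show ?thesis .
  qed
  have cTh: "real (card Th) \<le> (\<Sum>x\<in>V-T. real (P x))"
  proof -
    have "real (card Th) = (\<Sum>x\<in>Th. 1)" by simp
    also have "\<dots> \<le> (\<Sum>x\<in>Th. real (P x))" by (rule sum_mono) (auto simp: Th_def)
    also have "\<dots> \<le> (\<Sum>x\<in>V-T. real (P x))"
      by (rule sum_mono2) (use finV in \<open>auto simp: Th_def\<close>)
    finally show ?thesis .
  qed
  define F where "F a = (\<Sum>x\<in>T. Kw E T a x) / 2 + (\<Sum>x\<in>S. Kw E T a (wf x)) / 2" for a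
  have swap: "(\<Sum>x\<in>T. \<Phi> x / 2) + (\<Sum>x\<in>S. \<Phi> (wf x) / 2) = (\<Sum>a\<in>T. real (P a) * F a)"
  proof -
    have "(\<Sum>x\<in>T. \<Phi> x / 2) = (\<Sum>a\<in>T. real (P a) * ((\<Sum>x\<in>T. Kw E T a x) / 2))"
      unfolding \<Phi>_def sum_divide_distrib[symmetric]
      by (subst sum.swap) (simp add: sum_distrib_left sum_divide_distrib)
    moreover have "(\<Sum>x\<in>S. \<Phi> (wf x) / 2) = (\<Sum>a\<in>T. real (P a) * ((\<Sum>x\<in>S. Kw E T a (wf x)) / 2))"
      unfolding \<Phi>_def sum_divide_distrib[symmetric]
      by (subst sum.swap) (simp add: sum_distrib_left sum_divide_distrib)
    ultimately show ?thesis unfolding F_def by (simp add: sum.distrib algebra_simps)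
  qed
  have Fb: "\<And>a. a \<in> T \<Longrightarrow> F a \<le> 13/2"
  proof -
    fix a assume aT: "a \<in> T"
    have aV: "a \<in> torus_vertices m n" using aT TV unfolding V_def by blast
    show "F a \<le> 13/2" unfolding F_def
    proof (rule static_bound[where V = V and d = "dd m n a"])
      show "finite V" by (rule finV)
      show "T \<subseteq> V" by (rule TV)
      show "S \<subseteq> V" unfolding S_def by blast
      show "T \<inter> S = {}" unfolding S_def by blast
      show "\<And>x. x \<in> S \<Longrightarrow> wf x \<in> T \<and> E (wf x) x" by (rule wS)
      show "a \<in> T" by (rule aT)
      show "\<And>x y. E x y \<Longrightarrow> E y x" unfolding E_def by (rule torus_adj_sym)
      show "\<And>y. y \<in> T \<Longrightarrow> finite {x. E y x} \<and> card {x. E y x} \<le> 4"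
        unfolding E_def by (rule torus_nb_card)
      show "dd m n a a = 0" by (rule dd_self)
      show "\<And>y x. E y x \<Longrightarrow> dd m n a x \<le> dd m n a y + 1"
        unfolding E_def by (rule dd_lip[OF aV])
      show "(\<Sum>x\<in>V. (1/2::real) ^ dd m n a x) \<le> 9"
        unfolding V_def by (rule dd_sum[OF aV])
    qed
  qed
  have "(\<Sum>a\<in>T. real (P a) * F a) \<le> (\<Sum>a\<in>T. real (P a) * (13/2))"
  proof (rule sum_mono)
    fix a assume "a \<in> T"
    from Fb[OF this] show "real (P a) * F a \<le> real (P a) * (13/2)"
      by (intro mult_left_mono) auto
  qed
  also have "\<dots> = 13/2 * (\<Sum>a\<in>T. real (P a))" by (simp add: sum_distrib_left mult.commute)
  finally have cF: "(\<Sum>a\<in>T. real (P a) * F a) \<le> 13/2 * (\<Sum>a\<in>T. real (P a))" .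
  have split: "(\<Sum>x\<in>V. real (P x)) = (\<Sum>x\<in>V-T. real (P x)) + (\<Sum>x\<in>T. real (P x))"
    using sum.subset_diff[OF TV finV] .
  have nn: "0 \<le> (\<Sum>x\<in>V-T. real (P x))" by (simp add: sum_nonneg)
  have "real (card V) \<le> 13/2 * (\<Sum>x\<in>V. real (P x))"
    using c1 cT cS cTh swap cF split nn by linarith
  then show ?thesis unfolding V_def by (simp add: of_nat_sum)
qed

theorem theorem5p6:
  fixes m n :: nat
  assumes "5 \<le> m" and "5 \<le> n"
  shows "real (pi_opt (torus_vertices m n) (torus_adj m n)) \<ge> 2 / 13 * real n * real m"
proof -
  define V where "V = torus_vertices m n"
  define E where "E = torus_adj m n"
  define S0 where "S0 = {sum P V | P. is_distribution V P \<and> solvable V E P}"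
  define P1 where "P1 x = (if x \<in> V then 1 else 0 :: nat)" for x
  have "is_distribution V P1" unfolding is_distribution_def P1_def by simp
  moreover have "solvable V E P1"
    unfolding solvable_def reachable_def P1_def by auto
  ultimately have "sum P1 V \<in> S0" unfolding S0_def by blast
  then have ne: "S0 \<noteq> {}" by blast
  have mem: "Inf S0 \<in> S0" using ne by (rule Inf_nat_def1)
  then obtain P where P: "Inf S0 = sum P V" "is_distribution V P" "solvable V E P"
    unfolding S0_def by blast
  have cardV: "card V = m * n" unfolding V_def torus_vertices_def by simp
  have "real (card V) \<le> 13/2 * real (sum P V)"
    using main_bound[of m n P] P(2,3) unfolding V_def E_def by blast
  then have "real m * real n \<le> 13/2 * real (Inf S0)" using cardV P(1) by simp
  moreover have "pi_opt V E = Inf S0" unfolding pi_opt_def S0_def ..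
  moreover have "real n * real m = real m * real n" by simp
  ultimately show ?thesis unfolding V_def E_def by linarith
qed


end
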